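(* Suppose that a graph property $\Pi$ has a canonical size-oblivious $\varepsilon$-tester with sample complexity $s=s(\varepsilon)$. Then for every $n\ge s^4$ and every $n$-vertex graph $G$ which is $\varepsilon$-far from $\Pi$, if $U$ is chosen uniformly at random from the $s^4$-element subsets of $V(G)$, then $\mathbb{P}[G[U]\in\Pi]\le e^{-\Omega(s)}$, where the constant implicit in $\Omega$ is absolute (independent of $\Pi$, $\varepsilon$, $n$ and $G$).
   Context: Dense graph model: graphs are given as adjacency matrices; an $n$-vertex graph is $\varepsilon$-far from $\Pi$ if at least $\varepsilon n^2$ adjacency-matrix entries must be changed to obtain a graph in $\Pi$. An $\varepsilon$-tester for $\Pi$ accepts graphs in $\Pi$ with probability at least $2/3$ and rejects graphs $\varepsilon$-far from $\Pi$ with probability at least $2/3$. A tester is canonical if it samples a uniformly random set of $s$ vertices, queries all pairs among them, and decides based only on the isomorphism class of the induced subgraph on the sample; $s$ is its sample complexity. It is size-oblivious if its operation depends only on $\varepsilon$, not on the number of vertices $n$ (so here $s$ depends only on $\varepsilon$). $G[U]$ denotes the subgraph of $G$ induced on $U$. *)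

theory Defs
  imports Complex_Main
begin

type_synonym graph = "nat set \<times> (nat \<Rightarrow> nat \<Rightarrow> bool)"

definition verts :: "graph \<Rightarrow> nat set" where "verts G = fst G"
definition adj :: "graph \<Rightarrow> nat \<Rightarrow> nat \<Rightarrow> bool" where "adj G = snd G"

definition is_graph :: "graph \<Rightarrow> bool" where
  "is_graph G \<longleftrightarrow> finite (verts G)
     \<and> (\<forall>u v. adj G u v \<longrightarrow> u \<in> verts G \<and> v \<in> verts G)
     \<and> (\<forall>u v. adj G u v \<longleftrightarrow> adj G v u)
     \<and> (\<forall>u. \<not> adj G u u)"

definition graph_iso :: "graph \<Rightarrow> graph \<Rightarrow> bool" where
  "graph_iso G H \<longleftrightarrow> (\<exists>f. bij_betw f (verts G) (verts H)
     \<and> (\<forall>u\<in>verts G. \<forall>v\<in>verts G. adj G u v \<longleftrightarrow> adj H (f u) (f v)))"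

definition induced :: "graph \<Rightarrow> nat set \<Rightarrow> graph" where
  "induced G U = (U, \<lambda>u v. adj G u v \<and> u \<in> U \<and> v \<in> U)"

definition graph_property :: "graph set \<Rightarrow> bool" where
  "graph_property P \<longleftrightarrow> (\<forall>G H. is_graph G \<and> is_graph H \<and> graph_iso G H \<and> G \<in> P \<longrightarrow> H \<in> P)"

definition adj_dist :: "graph \<Rightarrow> graph \<Rightarrow> nat" where
  "adj_dist G H = card {(u, v). u \<in> verts G \<and> v \<in> verts G \<and> adj G u v \<noteq> adj H u v}"

definition eps_far :: "real \<Rightarrow> graph set \<Rightarrow> graph \<Rightarrow> bool" where
  "eps_far eps P G \<longleftrightarrow> (\<forall>H. is_graph H \<and> verts H = verts G \<and> H \<in> P \<longrightarrow>
      real (adj_dist G H) \<ge> eps * (real (card (verts G)))^2)"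

definition subset_prob :: "nat set \<Rightarrow> nat \<Rightarrow> (nat set \<Rightarrow> bool) \<Rightarrow> real" where
  "subset_prob V k Q = real (card {U. U \<subseteq> V \<and> card U = k \<and> Q U}) / real (card V choose k)"

text \<open>A canonical size-oblivious eps-tester for P with sample complexity s: it samples a
uniformly random s-subset S, and accepts iff G[S] lies in the fixed set A of graphs,
which is closed under isomorphism (the decision depends only on the isomorphism class).
s and A depend only on eps (not on the number of vertices n), and the tester works for
every graph with at least s vertices.\<close>
definition canonical_tester :: "graph set \<Rightarrow> real \<Rightarrow> nat \<Rightarrow> graph set \<Rightarrow> bool" where
  "canonical_tester P eps s A \<longleftrightarrow>
     graph_property A \<and>
     (\<forall>G. is_graph G \<and> card (verts G) \<ge> s \<longrightarrow>
        (G \<in> P \<longrightarrow> subset_prob (verts G) s (\<lambda>S. induced G S \<in> A) \<ge> 2/3) \<and>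
        (eps_far eps P G \<longrightarrow> subset_prob (verts G) s (\<lambda>S. induced G S \<notin> A) \<ge> 2/3))"

end

theory Submission
  imports Defs
begin

lemma card_supersets:
  assumes "finite V" "W \<subseteq> V" "card W \<le> m"
  shows "card {U. U \<subseteq> V \<and> card U = m \<and> W \<subseteq> U} = (card V - card W) choose (m - card W)"
proof -
  have fW: "finite W" using assms finite_subset by blast
  have "bij_betw (\<lambda>U. U - W) {U. U \<subseteq> V \<and> card U = m \<and> W \<subseteq> U} {T. T \<subseteq> V - W \<and> card T = m - card W}"
  proof (rule bij_betw_byWitness[where f' = "\<lambda>T. T \<union> W"])
    show "\<forall>a\<in>{U. U \<subseteq> V \<and> card U = m \<and> W \<subseteq> U}. a - W \<union> W = a" by auto
    show "\<forall>a'\<in>{T. T \<subseteq> V - W \<and> card T = m - card W}. a' \<union> W - W = a'" by auto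
    show "(\<lambda>U. U - W) ` {U. U \<subseteq> V \<and> card U = m \<and> W \<subseteq> U} \<subseteq> {T. T \<subseteq> V - W \<and> card T = m - card W}"
      using fW by (auto simp: card_Diff_subset)
    show "(\<lambda>T. T \<union> W) ` {T. T \<subseteq> V - W \<and> card T = m - card W} \<subseteq> {U. U \<subseteq> V \<and> card U = m \<and> W \<subseteq> U}"
    proof clarify
      fix T assume T: "T \<subseteq> V - W" "card T = m - card W"
      have "finite T" using T assms finite_subset by (meson finite_Diff)
      hence "card (T \<union> W) = card T + card W" using T fW by (intro card_Un_disjoint) auto
      thus "T \<union> W \<subseteq> V \<and> card (T \<union> W) = m \<and> W \<subseteq> T \<union> W" using T assms by auto
    qed
  qed
  hence "card {U. U \<subseteq> V \<and> card U = m \<and> W \<subseteq> U} = card {T. T \<subseteq> V - W \<and> card T = m - card W}"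
    by (rule bij_betw_same_card)
  also have "\<dots> = card (V - W) choose (m - card W)" using assms by (intro n_subsets) auto
  also have "card (V - W) = card V - card W" using assms fW by (simp add: card_Diff_subset)
  finally show ?thesis .
qed

lemma binom_ratio:
  assumes "a + s \<le> m" "m \<le> n"
  shows "real ((m - a) choose s) * real (n choose s) \<le> real (m choose s) * real ((n - a) choose s)"
  using assms
proof (induction a)
  case 0 thus ?case by simp
next
  case (Suc a)
  define x where "x = m - a"
  define y where "y = n - a"
  have xy: "x \<le> y" "s < x" using Suc.prems by (auto simp: x_def y_def)
  have IH: "real (x choose s) * real (n choose s) \<le> real (m choose s) * real (y choose s)"
    using Suc by (auto simp: x_def y_def)
  have ex: "real ((x - 1) choose s) * real x = (real x - real s) * real (x choose s)"
    using binomial_absorb_comp[of x s] xy by (metis mult.commute of_nat_diff of_nat_mult less_imp_le)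
  have ey: "real ((y - 1) choose s) * real y = (real y - real s) * real (y choose s)"
    using binomial_absorb_comp[of y s] xy by (metis mult.commute of_nat_diff of_nat_mult less_imp_le less_le_trans)
  have xpos: "real x > 0" "real y > 0" using xy by auto
  have ex': "real ((x - 1) choose s) = (1 - real s / real x) * real (x choose s)"
    using ex xpos by (simp add: field_simps)
  have ey': "real ((y - 1) choose s) = (1 - real s / real y) * real (y choose s)"
    using ey xpos by (simp add: field_simps)
  have fr: "0 \<le> 1 - real s / real x" "1 - real s / real x \<le> 1 - real s / real y"
    using xy xpos by (auto simp: field_simps intro!: mult_left_mono)
  have "real ((x - 1) choose s) * real (n choose s) = (1 - real s / real x) * (real (x choose s) * real (n choose s))"
    using ex' by simp
  also have "\<dots> \<le> (1 - real s / real x) * (real (m choose s) * real (y choose s))"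
    using IH fr by (intro mult_left_mono) auto
  also have "\<dots> \<le> (1 - real s / real y) * (real (m choose s) * real (y choose s))"
    using fr by (intro mult_right_mono) auto
  also have "\<dots> = real (m choose s) * real ((y - 1) choose s)" using ey' by simp
  finally show ?case by (simp add: x_def y_def)
qed

lemma binom_ratio2:
  assumes "a + s \<le> m" "m \<le> n"
  shows "real ((n - a - s) choose (m - a - s)) * real (n choose s) \<le> real ((n - a) choose (m - a)) * real (m choose s)"
proof -
  define N where "N = n - a"
  define M where "M = m - a"
  have NM: "s \<le> M" "M \<le> N" using assms by (auto simp: N_def M_def)
  have cm: "real (N choose M) * real (M choose s) = real (N choose s) * real ((N - s) choose (M - s))"
    using choose_mult[OF NM] by (metis of_nat_mult)
  have pos: "real (N choose s) > 0" using NM by auto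
  have "real (N choose s) * (real ((N - s) choose (M - s)) * real (n choose s))
      = real (N choose M) * (real (M choose s) * real (n choose s))" using cm by (simp add: algebra_simps)
  also have "\<dots> \<le> real (N choose M) * (real (m choose s) * real (N choose s))"
    using binom_ratio[OF assms] by (intro mult_left_mono) (auto simp: N_def M_def)
  finally have "real (N choose s) * (real ((N - s) choose (M - s)) * real (n choose s))
      \<le> real (N choose s) * (real (N choose M) * real (m choose s))" by (simp add: algebra_simps)
  hence "real ((N - s) choose (M - s)) * real (n choose s) \<le> real (N choose M) * real (m choose s)"
    using pos by (simp add: mult_le_cancel_left)
  thus ?thesis by (simp add: N_def M_def)
qed

lemma binom_ratio_pow:
  assumes "j * s \<le> m" "m \<le> n"
  shows "real ((n - j * s) choose (m - j * s)) * real (n choose s) ^ j \<le> real (n choose m) * real (m choose s) ^ j"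
  using assms
proof (induction j)
  case 0 thus ?case by simp
next
  case (Suc j)
  have IH: "real ((n - j * s) choose (m - j * s)) * real (n choose s) ^ j \<le> real (n choose m) * real (m choose s) ^ j"
    using Suc by auto
  have st: "real ((n - j * s - s) choose (m - j * s - s)) * real (n choose s) \<le> real ((n - j * s) choose (m - j * s)) * real (m choose s)"
    using Suc.prems by (intro binom_ratio2) auto
  have "real ((n - Suc j * s) choose (m - Suc j * s)) * real (n choose s) ^ Suc j
     = (real ((n - j * s - s) choose (m - j * s - s)) * real (n choose s)) * real (n choose s) ^ j"
    by (simp add: diff_diff_add algebra_simps)
  also have "\<dots> \<le> (real ((n - j * s) choose (m - j * s)) * real (m choose s)) * real (n choose s) ^ j"
    using st by (intro mult_right_mono) auto
  also have "\<dots> = (real ((n - j * s) choose (m - j * s)) * real (n choose s) ^ j) * real (m choose s)"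
    by simp
  also have "\<dots> \<le> (real (n choose m) * real (m choose s) ^ j) * real (m choose s)"
    using IH by (intro mult_right_mono) auto
  finally show ?case by (simp add: ac_simps)
qed


fun dt :: "'a set set \<Rightarrow> nat \<Rightarrow> 'a set list set" where
  "dt F 0 = {[]}"
| "dt F (Suc j) = (\<lambda>(xs, S). S # xs) ` (SIGMA xs:dt F j. {S\<in>F. S \<inter> \<Union>(set xs) = {}})"

lemma dt_props:
  assumes "xs \<in> dt F j" "\<forall>S\<in>F. finite S \<and> card S = s"
  shows "set xs \<subseteq> F \<and> card (\<Union>(set xs)) = j * s"
  using assms
proof (induction j arbitrary: xs)
  case 0 thus ?case by simp
next
  case (Suc j)
  then obtain ys S where ys: "xs = S # ys" "ys \<in> dt F j" "S \<in> F" "S \<inter> \<Union>(set ys) = {}" by auto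
  have IH: "set ys \<subseteq> F" "card (\<Union>(set ys)) = j * s" using Suc.IH[OF ys(2)] Suc.prems by auto
  have "finite (\<Union>(set ys))" using IH Suc.prems by auto
  hence "card (S \<union> \<Union>(set ys)) = card S + card (\<Union>(set ys))"
    using ys Suc.prems by (intro card_Un_disjoint) auto
  thus ?case using ys IH Suc.prems by auto
qed

lemma dt_finite: "finite F \<Longrightarrow> finite (dt F j)"
  by (induction j) auto

lemma dt_card:
  assumes "finite F"
  shows "card (dt F (Suc j)) = (\<Sum>xs\<in>dt F j. card {S\<in>F. S \<inter> \<Union>(set xs) = {}})"
proof -
  have "inj_on (\<lambda>(xs, S). S # xs) (SIGMA xs:dt F j. {S\<in>F. S \<inter> \<Union>(set xs) = {}})"
    by (auto simp: inj_on_def)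
  hence "card (dt F (Suc j)) = card (SIGMA xs:dt F j. {S\<in>F. S \<inter> \<Union>(set xs) = {}})"
    by (simp add: card_image)
  also have "\<dots> = (\<Sum>xs\<in>dt F j. card {S\<in>F. S \<inter> \<Union>(set xs) = {}})"
    using assms dt_finite[OF assms] by (intro card_SigmaI) auto
  finally show ?thesis .
qed

lemma dt_upper:
  assumes "finite F"
  shows "card (dt F j) \<le> card F ^ j"
proof (induction j)
  case 0 thus ?case by simp
next
  case (Suc j)
  have "card (dt F (Suc j)) = (\<Sum>xs\<in>dt F j. card {S\<in>F. S \<inter> \<Union>(set xs) = {}})"
    using dt_card[OF assms] .
  also have "\<dots> \<le> (\<Sum>xs\<in>dt F j. card F)"
    using assms by (intro sum_mono card_mono) auto
  also have "\<dots> = card (dt F j) * card F" by simp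
  also have "\<dots> \<le> card F ^ j * card F" using Suc by simp
  finally show ?case by (simp add: mult.commute)
qed

lemma dt_lower:
  assumes "finite F" "L \<ge> 0"
    "\<And>i xs. i < j \<Longrightarrow> xs \<in> dt F i \<Longrightarrow> real (card {S\<in>F. S \<inter> \<Union>(set xs) = {}}) \<ge> L"
    "i \<le> j"
  shows "real (card (dt F i)) \<ge> L ^ i"
  using assms(4)
proof (induction i)
  case 0 thus ?case by simp
next
  case (Suc i)
  have "real (card (dt F (Suc i))) = (\<Sum>xs\<in>dt F i. real (card {S\<in>F. S \<inter> \<Union>(set xs) = {}}))"
    using dt_card[OF assms(1)] by simp
  also have "\<dots> \<ge> (\<Sum>xs\<in>dt F i. L)"
  proof (intro sum_mono)
    fix xs assume "xs \<in> dt F i"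
    thus "L \<le> real (card {S\<in>F. S \<inter> \<Union>(set xs) = {}})" using assms(3)[of i xs] Suc.prems by simp
  qed
  finally have "real (card (dt F (Suc i))) \<ge> real (card (dt F i)) * L" by simp
  moreover have "real (card (dt F i)) * L \<ge> L ^ i * L"
    using Suc assms(2) by (intro mult_right_mono) auto
  ultimately show ?case by (simp add: mult.commute)
qed

lemma dt_restrict:
  "dt {S\<in>F. S \<subseteq> U} j = {xs \<in> dt F j. \<Union>(set xs) \<subseteq> U}"
proof (induction j)
  case 0 thus ?case by auto
next
  case (Suc j)
  show ?case
    unfolding dt.simps Suc by force
qed


lemma card_filter_sum: "finite A \<Longrightarrow> card {x\<in>A. P x} = (\<Sum>x\<in>A. if P x then 1 else 0 :: nat)"
  by (simp add: sum.If_cases Int_def)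

lemma main_count:
  fixes V :: "'a set" and F :: "'a set set"
  assumes fV: "finite V" and FV: "F \<subseteq> {S. S \<subseteq> V \<and> card S = s}"
    and Fc: "3 * real (card F) \<le> real (card V choose s)"
    and mn: "m \<le> card V" and s1: "1 \<le> s" and j1: "1 \<le> j" and jm: "6 * (j * s) * s \<le> m"
  shows "real (card {U. U \<subseteq> V \<and> card U = m \<and> 3 * real (card {S\<in>F. S \<subseteq> U}) \<ge> 2 * real (m choose s)})
          \<le> (2/3) ^ j * real (card V choose m)"
proof -
  define n where "n = card V"
  define B where "B = {U. U \<subseteq> V \<and> card U = m \<and> 3 * real (card {S\<in>F. S \<subseteq> U}) \<ge> 2 * real (m choose s)}"
  define Um where "Um = {U. U \<subseteq> V \<and> card U = m}"
  define C where "C = real (m choose s)"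
  have "F \<subseteq> Pow V" using FV by auto
  hence fF: "finite F" using fV finite_subset by auto
  have fin_sets: "\<forall>S\<in>F. finite S \<and> card S = s" using FV fV finite_subset by blast
  have jsm: "j * s \<le> m" using jm s1 by (metis le_trans mult_le_mono1 mult.commute mult_1 one_le_numeral mult_le_mono)
  have m_pos: "m > 0" using jm j1 s1 by (metis less_le_trans mult_pos_pos zero_less_one less_le_trans le_trans nat_0_less_mult_iff zero_less_numeral linorder_not_le le_zero_eq not_one_le_zero)
  have sm: "s \<le> m" using jsm j1 by (metis le_trans mult_le_mono1 mult_1)
  have Cpos: "C > 0" using sm by (simp add: C_def)
  have fUm: "finite Um" using fV by (simp add: Um_def)
  have BUm: "B \<subseteq> Um" by (auto simp: B_def Um_def)
  have low: "real (card (dt {S\<in>F. S \<subseteq> U} j)) \<ge> (C/2) ^ j" if UB: "U \<in> B" for U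
  proof (rule dt_lower)
    show "finite {S\<in>F. S \<subseteq> U}" using fF by simp
    show "C/2 \<ge> 0" using Cpos by simp
    show "j \<le> j" by simp
    fix i xs assume ij: "i < j" and xs: "xs \<in> dt {S\<in>F. S \<subseteq> U} i"
    define W where "W = \<Union>(set xs)"
    define FU where "FU = {S\<in>F. S \<subseteq> U}"
    have U: "U \<subseteq> V" "card U = m" "3 * real (card FU) \<ge> 2 * C"
      using UB by (auto simp: B_def FU_def C_def)
    have fU: "finite U" using U fV finite_subset by blast
    have dp: "set xs \<subseteq> FU \<and> card W = i * s"
      using dt_props[OF xs[folded FU_def], of s] fin_sets by (auto simp: FU_def W_def)
    have WU: "W \<subseteq> U" using dp by (auto simp: W_def FU_def)
    define X where "X = (\<lambda>v. {T. T \<subseteq> U \<and> card T = s \<and> {v} \<subseteq> T})"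
    have sub: "FU \<subseteq> {S\<in>FU. S \<inter> W = {}} \<union> (\<Union>v\<in>W. X v)"
      using FV by (auto simp: FU_def X_def)
    have "(\<Union>v\<in>W. X v) \<subseteq> Pow U" by (auto simp: X_def)
    hence fX: "finite (\<Union>v\<in>W. X v)" using fU finite_subset by auto
    have d1: "card FU \<le> card ({S\<in>FU. S \<inter> W = {}} \<union> (\<Union>v\<in>W. X v))"
      using fF fX sub by (intro card_mono) (auto simp: FU_def)
    have d2: "card ({S\<in>FU. S \<inter> W = {}} \<union> (\<Union>v\<in>W. X v)) \<le> card {S\<in>FU. S \<inter> W = {}} + card (\<Union>v\<in>W. X v)"
      by (rule card_Un_le)
    have d3: "card (\<Union>v\<in>W. X v) \<le> (\<Sum>v\<in>W. card (X v))" by (rule card_UN_le) (use WU fU finite_subset in blast)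
    have d4: "(\<Sum>v\<in>W. card (X v)) = (\<Sum>v\<in>W. (m - 1) choose (s - 1))"
    proof (intro sum.cong refl)
      fix v assume "v \<in> W"
      thus "card (X v) = (m - 1) choose (s - 1)"
        unfolding X_def using card_supersets[of U "{v}" s] fU WU U s1 by auto
    qed
    have d5: "(\<Sum>v\<in>W. (m - 1) choose (s - 1)) = card W * ((m - 1) choose (s - 1))" by simp
    have "card FU \<le> card {S\<in>FU. S \<inter> W = {}} + card W * ((m - 1) choose (s - 1))"
      using d1 d2 d3 d4 d5 by linarith
    hence c1: "real (card FU) \<le> real (card {S\<in>FU. S \<inter> W = {}}) + real (card W) * real ((m - 1) choose (s - 1))"
      by (simp flip: of_nat_mult of_nat_add)
    have ab: "real s * C = real m * real ((m - 1) choose (s - 1))"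
      using binomial_absorption[of "s - 1" m] s1 m_pos unfolding C_def
      by (metis Suc_diff_1 less_le_trans of_nat_mult zero_less_one)
    have "real (card W) * real ((m - 1) choose (s - 1)) = real (i * s) * (real s * C / real m)"
      using ab m_pos dp by (simp add: field_simps)
    also have "\<dots> \<le> real (j * s) * (real s * C / real m)"
      using ij Cpos by (intro mult_right_mono) (auto intro!: mult_right_mono)
    also have "\<dots> = real (j * s * s) * C / real m" by simp
    also have "\<dots> \<le> C / 6"
    proof -
      have "real (6 * (j * s) * s) \<le> real m" using jm by linarith
      hence "real (j * s * s) * C * 6 \<le> C * real m" using Cpos
        by (simp add: mult.commute mult.left_commute)
      thus ?thesis using m_pos by (simp add: field_simps)
    qed
    finally have c2: "real (card W) * real ((m - 1) choose (s - 1)) \<le> C / 6" .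
    have "{S\<in>FU. S \<inter> W = {}} = {S\<in>{S \<in> F. S \<subseteq> U}. S \<inter> \<Union>(set xs) = {}}"
      by (simp add: FU_def W_def)
    moreover have "real (card {S\<in>FU. S \<inter> W = {}}) \<ge> C / 2" using c1 c2 U(3) by linarith
    ultimately show "C / 2 \<le> real (card {S\<in>{S \<in> F. S \<subseteq> U}. S \<inter> \<Union>(set xs) = {}})" by simp
  qed
  have "(\<Sum>U\<in>Um. card (dt {S\<in>F. S \<subseteq> U} j)) = (\<Sum>U\<in>Um. card {xs\<in>dt F j. \<Union>(set xs) \<subseteq> U})"
    by (simp add: dt_restrict)
  also have "\<dots> = (\<Sum>U\<in>Um. \<Sum>xs\<in>dt F j. if \<Union>(set xs) \<subseteq> U then 1 else 0)"
    using dt_finite[OF fF] by (simp add: card_filter_sum)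
  also have "\<dots> = (\<Sum>xs\<in>dt F j. \<Sum>U\<in>Um. if \<Union>(set xs) \<subseteq> U then 1 else 0)"
    by (rule sum.swap)
  also have "\<dots> = (\<Sum>xs\<in>dt F j. card {U\<in>Um. \<Union>(set xs) \<subseteq> U})"
    using fUm by (simp add: card_filter_sum)
  also have "\<dots> = (\<Sum>xs\<in>dt F j. (n - j * s) choose (m - j * s))"
  proof (intro sum.cong refl)
    fix xs assume xs: "xs \<in> dt F j"
    have dp: "set xs \<subseteq> F" "card (\<Union>(set xs)) = j * s" using dt_props[OF xs fin_sets] by auto
    have "\<Union>(set xs) \<subseteq> V" using dp FV by auto
    have "{U\<in>Um. \<Union>(set xs) \<subseteq> U} = {U. U \<subseteq> V \<and> card U = m \<and> \<Union>(set xs) \<subseteq> U}" by (auto simp: Um_def)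
    also have "card \<dots> = (n - j * s) choose (m - j * s)"
      using card_supersets[OF fV \<open>\<Union>(set xs) \<subseteq> V\<close>, of m] dp jsm by (simp add: n_def)
    finally show "card {U\<in>Um. \<Union>(set xs) \<subseteq> U} = (n - j * s) choose (m - j * s)" .
  qed
  also have "\<dots> = card (dt F j) * ((n - j * s) choose (m - j * s))" by simp
  finally have s2: "(\<Sum>U\<in>Um. card (dt {S\<in>F. S \<subseteq> U} j)) = card (dt F j) * ((n - j * s) choose (m - j * s))" .
  have "real (card B) * (C/2) ^ j = (\<Sum>U\<in>B. (C/2) ^ j)" by simp
  also have "\<dots> \<le> (\<Sum>U\<in>B. real (card (dt {S\<in>F. S \<subseteq> U} j)))" by (intro sum_mono low)
  also have "\<dots> \<le> (\<Sum>U\<in>Um. real (card (dt {S\<in>F. S \<subseteq> U} j)))"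
    using BUm fUm by (intro sum_mono2) auto
  also have "\<dots> = real (\<Sum>U\<in>Um. card (dt {S\<in>F. S \<subseteq> U} j))" by simp
  also have "\<dots> = real (card (dt F j) * ((n - j * s) choose (m - j * s)))" using s2 by (simp only:)
  also have "\<dots> = real (card (dt F j)) * real ((n - j * s) choose (m - j * s))" by simp
  also have "\<dots> \<le> real (card F) ^ j * real ((n - j * s) choose (m - j * s))"
    using dt_upper[OF fF, of j] by (intro mult_right_mono) (auto simp flip: of_nat_power)
  also have "\<dots> \<le> (real (n choose s) / 3) ^ j * real ((n - j * s) choose (m - j * s))"
    using Fc by (intro mult_right_mono power_mono) (auto simp: n_def)
  also have "\<dots> = (1/3) ^ j * (real ((n - j * s) choose (m - j * s)) * real (n choose s) ^ j)"
    by (simp add: power_divide)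
  also have "\<dots> \<le> (1/3) ^ j * (real (n choose m) * C ^ j)"
    using binom_ratio_pow[OF jsm] mn by (intro mult_left_mono) (auto simp: n_def C_def)
  also have "\<dots> = ((2/3) ^ j * real (n choose m)) * (C/2) ^ j"
    by (simp add: power_divide field_simps)
  finally have "real (card B) * (C/2) ^ j \<le> ((2/3) ^ j * real (n choose m)) * (C/2) ^ j" .
  hence "real (card B) \<le> (2/3) ^ j * real (n choose m)" using Cpos
    by (simp add: mult_le_cancel_right)
  thus ?thesis by (simp add: B_def n_def)
qed


lemma induced_is_graph: "is_graph G \<Longrightarrow> U \<subseteq> verts G \<Longrightarrow> is_graph (induced G U)"
  unfolding is_graph_def induced_def verts_def adj_def by (auto intro: finite_subset)

lemma induced_induced: "S \<subseteq> U \<Longrightarrow> induced (induced G U) S = induced G S"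
  unfolding induced_def adj_def by auto

lemma exp_bound: "(2/3::real) ^ s = exp (- ln (3/2) * real s)"
proof -
  have "exp (- ln (3/2) * real s) = exp (real s * ln (2/3))" by (simp add: ln_div)
  also have "\<dots> = exp (ln (2/3)) ^ s" by (rule exp_of_nat_mult)
  finally show ?thesis by simp
qed

theorem lemma3p1:
  "\<exists>c>0. \<exists>s0::nat. \<forall>(P::graph set) (eps::real) (s::nat) (A::graph set) (G::graph).
     graph_property P \<and> eps > 0 \<and> canonical_tester P eps s A \<and> s \<ge> s0 \<and>
     is_graph G \<and> card (verts G) \<ge> s ^ 4 \<and> eps_far eps P G \<longrightarrow>
     subset_prob (verts G) (s ^ 4) (\<lambda>U. induced G U \<in> P) \<le> exp (- c * real s)"
proof (intro exI[of _ "ln (3/2)"] conjI exI[of _ "6::nat"] allI impI)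
  show "ln (3/2::real) > 0" by simp
  fix P :: "graph set" and eps :: real and s :: nat and A :: "graph set" and G :: graph
  assume H: "graph_property P \<and> eps > 0 \<and> canonical_tester P eps s A \<and> 6 \<le> s \<and>
     is_graph G \<and> card (verts G) \<ge> s ^ 4 \<and> eps_far eps P G"
  define V where "V = verts G"
  define n where "n = card V"
  define m where "m = s ^ 4"
  have gG: "is_graph G" and s6: "6 \<le> s" and far: "eps_far eps P G" using H by auto
  have fV: "finite V" using gG by (simp add: is_graph_def V_def)
  have mn: "m \<le> n" using H by (simp add: m_def n_def V_def)
  have s1: "1 \<le> s" using s6 by simp
  have sm: "s \<le> m" unfolding m_def using s1 by (simp add: self_le_power)
  have sn: "s \<le> n" using sm mn by simp
  have tester: "\<And>G'. is_graph G' \<Longrightarrow> card (verts G') \<ge> s \<Longrightarrow>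
        (G' \<in> P \<longrightarrow> subset_prob (verts G') s (\<lambda>S. induced G' S \<in> A) \<ge> 2/3) \<and>
        (eps_far eps P G' \<longrightarrow> subset_prob (verts G') s (\<lambda>S. induced G' S \<notin> A) \<ge> 2/3)"
    using H unfolding canonical_tester_def by blast
  define F where "F = {S. S \<subseteq> V \<and> card S = s \<and> induced G S \<in> A}"
  define NF where "NF = {S. S \<subseteq> V \<and> card S = s \<and> induced G S \<notin> A}"
  have Cns: "real (n choose s) > 0" using sn by simp
  have "subset_prob V s (\<lambda>S. induced G S \<notin> A) \<ge> 2/3"
    using tester[OF gG] H sn by (simp add: V_def n_def)
  hence NFc: "real (card NF) \<ge> 2/3 * real (n choose s)"
    using Cns by (simp add: subset_prob_def NF_def n_def field_simps)
  have "card F + card NF = card (F \<union> NF)"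
    using fV by (intro card_Un_disjoint[symmetric]) (auto simp: F_def NF_def)
  also have "F \<union> NF = {S. S \<subseteq> V \<and> card S = s}" by (auto simp: F_def NF_def)
  also have "card \<dots> = n choose s" using n_subsets[OF fV] by (simp add: n_def)
  finally have "real (card F) + real (card NF) = real (n choose s)" by (metis of_nat_add)
  hence Fc: "3 * real (card F) \<le> real (card V choose s)" using NFc by (simp add: n_def)
  have FV: "F \<subseteq> {S. S \<subseteq> V \<and> card S = s}" by (auto simp: F_def)
  have jm: "6 * (s * s) * s \<le> m"
  proof -
    have "6 * (s * s) * s \<le> s * (s * s) * s" using s6 by (intro mult_right_mono) auto
    thus ?thesis by (simp add: m_def power_def numeral_eq_Suc algebra_simps)
  qed
  have MC: "real (card {U. U \<subseteq> V \<and> card U = m \<and> 3 * real (card {S\<in>F. S \<subseteq> U}) \<ge> 2 * real (m choose s)})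
          \<le> (2/3) ^ s * real (card V choose m)"
    using main_count[OF fV FV Fc _ s1 s1 jm] mn by (simp add: n_def)
  have sub: "{U. U \<subseteq> V \<and> card U = m \<and> induced G U \<in> P}
     \<subseteq> {U. U \<subseteq> V \<and> card U = m \<and> 3 * real (card {S\<in>F. S \<subseteq> U}) \<ge> 2 * real (m choose s)}"
  proof
    fix U assume "U \<in> {U. U \<subseteq> V \<and> card U = m \<and> induced G U \<in> P}"
    hence U: "U \<subseteq> V" "card U = m" "induced G U \<in> P" by auto
    have gU: "is_graph (induced G U)" using induced_is_graph[OF gG] U by (simp add: V_def)
    have vU: "verts (induced G U) = U" by (simp add: induced_def verts_def)
    have "subset_prob U s (\<lambda>S. induced (induced G U) S \<in> A) \<ge> 2/3"
      using tester[OF gU] U sm vU by simp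
    moreover have "{S. S \<subseteq> U \<and> card S = s \<and> induced (induced G U) S \<in> A} = {S\<in>F. S \<subseteq> U}"
      using U by (auto simp: F_def induced_induced)
    moreover have "real (m choose s) > 0" using sm by simp
    ultimately have "3 * real (card {S\<in>F. S \<subseteq> U}) \<ge> 2 * real (m choose s)"
      using U by (simp add: subset_prob_def field_simps)
    thus "U \<in> {U. U \<subseteq> V \<and> card U = m \<and> 3 * real (card {S\<in>F. S \<subseteq> U}) \<ge> 2 * real (m choose s)}"
      using U by simp
  qed
  have fin2: "finite {U. U \<subseteq> V \<and> card U = m \<and> 3 * real (card {S\<in>F. S \<subseteq> U}) \<ge> 2 * real (m choose s)}"
    using fV by simp
  have "real (card {U. U \<subseteq> V \<and> card U = m \<and> induced G U \<in> P}) \<le> (2/3) ^ s * real (card V choose m)"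
    using card_mono[OF fin2 sub] MC by linarith
  moreover have "real (card V choose m) > 0" using mn by (simp add: n_def)
  ultimately have "subset_prob V m (\<lambda>U. induced G U \<in> P) \<le> (2/3) ^ s"
    by (simp add: subset_prob_def field_simps)
  thus "subset_prob (verts G) (s ^ 4) (\<lambda>U. induced G U \<in> P) \<le> exp (- ln (3/2) * real s)"
    using exp_bound by (simp add: V_def m_def)
qed

end
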